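(* Let $a<b$ and let $f:[a,b]\rightarrow\mathbb{R}$ be a twice continuously differentiable mapping in $(a,b)$ with $f''\in L^2[a,b]$. Assume additionally that $f(a+b-x)=f(x)$ for all $x\in[a,b]$. Then for all $x\in[a,\frac{a+b}{2}]$, \[ \left|f(x)-\frac{1}{b-a}\int_{a}^{b}f(t)\,dt\right|\leq \frac{(b-a)^{1/2}}{\pi}\left[\frac{(b-a)^2}{48}+\left(x-\frac{3a+b}{4}\right)^2\right]^{1/2}\|f''\|_2. \]
   Context: $\|g\|_2=\left(\int_a^b g(t)^2\,dt\right)^{1/2}$. *)

theory Defs
  imports "HOL-Analysis.Analysis"
begin

definition l2norm :: "real \<Rightarrow> real \<Rightarrow> (real \<Rightarrow> real) \<Rightarrow> real" where
  "l2norm a b g = sqrt (integral {a..b} (\<lambda>t. (g t)\<^sup>2))"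

end

theory Submission imports Defs begin

lemma cs_real:
  fixes A B X :: real
  assumes A: "0 < A" and B: "0 \<le> B" and h: "\<And>l. 0 < l \<Longrightarrow> X \<le> (l*A + B/l)/2"
  shows "X \<le> sqrt (A*B)"
proof (cases "B = 0")
  case True
  show ?thesis
  proof (rule ccontr)
    assume "\<not> ?thesis"
    then have X: "X > 0" using True by simp
    have "X \<le> ((X/A)*A + B/(X/A))/2" using h[of "X/A"] X A by simp
    then show False using X A True by simp
  qed
next
  case False
  then have Bp: "B > 0" using B by simp
  define l where "l = sqrt (B/A)"
  have lp: "l > 0" using A Bp by (simp add: l_def)
  have "l*A = sqrt (A*B)"
    using A Bp by (simp add: l_def real_sqrt_divide real_sqrt_mult field_simps)
  moreover have "B/l = sqrt (A*B)"
    using A Bp by (simp add: l_def real_sqrt_divide real_sqrt_mult field_simps)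
  ultimately show ?thesis using h[OF lp] by simp
qed

lemma sup_k:
  fixes A B k :: real
  assumes h: "\<And>c. 0 < c \<Longrightarrow> c < k \<Longrightarrow> c\<^sup>2 * A \<le> B" and A: "0 \<le> A" and B: "0 \<le> B" and k: "0 < k"
  shows "k\<^sup>2 * A \<le> B"
proof (rule ccontr)
  assume "\<not> ?thesis"
  then have lt: "B < k\<^sup>2 * A" by simp
  then have Ap: "A > 0" using A B by (cases "A = 0") auto
  define c where "c = sqrt ((B/A + k\<^sup>2)/2)"
  have c2: "c\<^sup>2 = (B/A + k\<^sup>2)/2" using A B by (simp add: c_def)
  have BA: "B/A < k\<^sup>2" using lt Ap by (simp add: field_simps)
  have "B/A \<ge> 0" using A B by simp
  then have cp: "c > 0" using k by (simp add: c_def add_nonneg_pos)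
  have "c\<^sup>2 < k\<^sup>2" using c2 BA by simp
  then have ck: "c < k" using cp k by (simp add: power_less_imp_less_base)
  have "B/A < c\<^sup>2" using c2 BA by simp
  then have "B < c\<^sup>2 * A" using Ap by (simp add: field_simps)
  then show False using h[OF cp ck] by simp
qed


lemma sq_aux:
  fixes s cs x y c :: real
  assumes "s \<noteq> 0" "cs * cs + s * s = 1"
  shows "x\<^sup>2 - c\<^sup>2*y\<^sup>2 - (2*y*x*(c * cs/s) - y\<^sup>2*c\<^sup>2/s\<^sup>2) = (x - y*c * cs/s)\<^sup>2"
proof -
  have e: "y\<^sup>2*c\<^sup>2/s\<^sup>2 = y\<^sup>2*c\<^sup>2*(cs * cs + s * s)/s\<^sup>2" using assms by simp
  have "x\<^sup>2 - c\<^sup>2*y\<^sup>2 - (2*y*x*(c * cs/s) - y\<^sup>2*c\<^sup>2*(cs * cs + s * s)/s\<^sup>2) = (x - y*c * cs/s)\<^sup>2"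
    using assms(1) by (simp add: field_simps power2_eq_square)
  then show ?thesis using assms(2) by simp
qed

lemma wirt_aux_left:
  fixes g g' :: "real \<Rightarrow> real" and u v c :: real
  assumes uv: "u < v" and c: "0 < c" "c * (v - u) < pi/2"
    and gc: "continuous_on {u..v} g"
    and gd: "\<And>t. t \<in> {u<..<v} \<Longrightarrow> (g has_real_derivative g' t) (at t)"
    and g0: "g u = 0" and int: "(\<lambda>t. (g' t)\<^sup>2) integrable_on {u..v}"
  shows "c\<^sup>2 * integral {u..v} (\<lambda>t. (g t)\<^sup>2) \<le> integral {u..v} (\<lambda>t. (g' t)\<^sup>2)"
proof -
  define \<delta> where "\<delta> = pi/2 - c*(v-u)"
  define th where "th t = c*(t-u)+\<delta>" for t
  have dpos: "0 < \<delta>" using c by (simp add: \<delta>_def)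
  have thb: "\<delta> \<le> th t \<and> th t \<le> pi/2" if "t \<in> {u..v}" for t
    using that c by (auto simp: th_def \<delta>_def)
  have sinpos: "sin (th t) > 0" if "t \<in> {u..v}" for t
    using thb[OF that] dpos pi_gt_zero by (intro sin_gt_zero) auto
  define G where "G t = (g t)\<^sup>2 * (c * cos (th t) / sin (th t))" for t
  define G' where "G' t = 2 * g t * g' t * (c * cos (th t) / sin (th t)) - (g t)\<^sup>2 * c\<^sup>2 / (sin (th t))\<^sup>2" for t
  have Gd: "(G has_real_derivative G' t) (at t)" if t: "t \<in> {u<..<v}" for t
  proof -
    have s: "sin (th t) \<noteq> 0" using sinpos[of t] t by fastforce
    have "((\<lambda>t. (g t)\<^sup>2 * (c * cos (c*(t-u)+\<delta>) / sin (c*(t-u)+\<delta>))) has_real_derivative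
       (2 * g t * g' t) * (c * cos (th t) / sin (th t)) + (g t)\<^sup>2 * ((c * (- sin (th t) * c) * sin (th t) - c * cos (th t) * (cos (th t) * c)) / (sin (th t))\<^sup>2)) (at t)"
      using s unfolding th_def
      by (auto intro!: derivative_eq_intros gd[OF t] simp: power2_eq_square field_simps)
    moreover have "(2 * g t * g' t) * (c * cos (th t) / sin (th t)) + (g t)\<^sup>2 * ((c * (- sin (th t) * c) * sin (th t) - c * cos (th t) * (cos (th t) * c)) / (sin (th t))\<^sup>2) = G' t"
    proof -
      have "(c * (- sin (th t) * c) * sin (th t) - c * cos (th t) * (cos (th t) * c)) = - c\<^sup>2 * (cos (th t) * cos (th t) + sin (th t) * sin (th t))"
        by (simp only: power2_eq_square) algebra
      then have "(c * (- sin (th t) * c) * sin (th t) - c * cos (th t) * (cos (th t) * c)) = - c\<^sup>2"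
        by simp
      then show ?thesis by (simp add: G'_def)
    qed
    ultimately show ?thesis unfolding G_def th_def by simp
  qed
  have Gc: "continuous_on {u..v} G"
    unfolding G_def th_def using sinpos gc
    by (intro continuous_intros) (auto simp: th_def, fastforce)
  have GI: "(G' has_integral (G v - G u)) {u..v}"
    by (rule fundamental_theorem_of_calculus_interior) (use uv Gc Gd in \<open>auto simp: has_real_derivative_iff_has_vector_derivative\<close>)
  have Gu: "G u = 0" by (simp add: G_def g0)
  have "th v = pi/2" by (simp add: th_def \<delta>_def)
  then have Gv: "G v = 0" unfolding G_def by (simp only:) simp
  have g2i: "(\<lambda>t. (g t)\<^sup>2) integrable_on {u..v}"
    by (rule integrable_continuous_interval) (intro continuous_intros gc)
  have hI: "((\<lambda>t. (g' t)\<^sup>2 - c\<^sup>2 * (g t)\<^sup>2 - G' t) has_integral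
      (integral {u..v} (\<lambda>t. (g' t)\<^sup>2) - c\<^sup>2 * integral {u..v} (\<lambda>t. (g t)\<^sup>2) - 0)) {u..v}"
    using GI Gu Gv
    by (intro has_integral_diff has_integral_mult_right integrable_integral int g2i) auto
  have "0 \<le> integral {u..v} (\<lambda>t. (g' t)\<^sup>2) - c\<^sup>2 * integral {u..v} (\<lambda>t. (g t)\<^sup>2) - 0"
  proof (rule has_integral_nonneg[OF hI])
    fix t assume t: "t \<in> {u..v}"
    have s: "sin (th t) \<noteq> 0" using sinpos[of t] t by fastforce
    have "(g' t)\<^sup>2 - c\<^sup>2 * (g t)\<^sup>2 - G' t = (g' t - g t * c * cos (th t) / sin (th t))\<^sup>2"
      unfolding G'_def using sq_aux[OF s sin_cos_squared_add3[of "th t"], of "g' t" c "g t"]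
      by (simp add: algebra_simps)
    then show "0 \<le> (g' t)\<^sup>2 - c\<^sup>2 * (g t)\<^sup>2 - G' t" by simp
  qed
  then show ?thesis by simp
qed


lemma wirt_aux_right:
  fixes g g' :: "real \<Rightarrow> real" and u v c :: real
  assumes uv: "u < v" and c: "0 < c" "c * (v - u) < pi/2"
    and gc: "continuous_on {u..v} g"
    and gd: "\<And>t. t \<in> {u<..<v} \<Longrightarrow> (g has_real_derivative g' t) (at t)"
    and g0: "g v = 0" and int: "(\<lambda>t. (g' t)\<^sup>2) integrable_on {u..v}"
  shows "c\<^sup>2 * integral {u..v} (\<lambda>t. (g t)\<^sup>2) \<le> integral {u..v} (\<lambda>t. (g' t)\<^sup>2)"
proof -
  define \<delta> where "\<delta> = pi/2 - c*(v-u)"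
  define th where "th t = c*(v-t)+\<delta>" for t
  have dpos: "0 < \<delta>" using c by (simp add: \<delta>_def)
  have thb: "\<delta> \<le> th t \<and> th t \<le> pi/2" if "t \<in> {u..v}" for t
    using that c by (auto simp: th_def \<delta>_def)
  have sinpos: "sin (th t) > 0" if "t \<in> {u..v}" for t
    using thb[OF that] dpos pi_gt_zero by (intro sin_gt_zero) auto
  define G where "G t = - (g t)\<^sup>2 * (c * cos (th t) / sin (th t))" for t
  define G' where "G' t = - 2 * g t * g' t * (c * cos (th t) / sin (th t)) - (g t)\<^sup>2 * c\<^sup>2 / (sin (th t))\<^sup>2" for t
  have Gd: "(G has_real_derivative G' t) (at t)" if t: "t \<in> {u<..<v}" for t
  proof -
    have s: "sin (th t) \<noteq> 0" using sinpos[of t] t by fastforce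
    have "((\<lambda>t. - (g t)\<^sup>2 * (c * cos (c*(v-t)+\<delta>) / sin (c*(v-t)+\<delta>))) has_real_derivative
       - (2 * g t * g' t) * (c * cos (th t) / sin (th t)) - (g t)\<^sup>2 * ((c * (- sin (th t) * (-c)) * sin (th t) - c * cos (th t) * (cos (th t) * (-c))) / (sin (th t))\<^sup>2)) (at t)"
      using s unfolding th_def
      by (auto intro!: derivative_eq_intros gd[OF t] simp: power2_eq_square field_simps)
    moreover have "- (2 * g t * g' t) * (c * cos (th t) / sin (th t)) - (g t)\<^sup>2 * ((c * (- sin (th t) * (-c)) * sin (th t) - c * cos (th t) * (cos (th t) * (-c))) / (sin (th t))\<^sup>2) = G' t"
    proof -
      have "(c * (- sin (th t) * (-c)) * sin (th t) - c * cos (th t) * (cos (th t) * (-c))) = c\<^sup>2 * (cos (th t) * cos (th t) + sin (th t) * sin (th t))"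
        by (simp only: power2_eq_square) algebra
      then have "(c * (- sin (th t) * (-c)) * sin (th t) - c * cos (th t) * (cos (th t) * (-c))) = c\<^sup>2"
        by simp
      then show ?thesis by (simp add: G'_def)
    qed
    ultimately show ?thesis unfolding G_def th_def by simp
  qed
  have Gc: "continuous_on {u..v} G"
    unfolding G_def th_def using sinpos gc
    by (intro continuous_intros) (auto simp: th_def, fastforce)
  have GI: "(G' has_integral (G v - G u)) {u..v}"
    by (rule fundamental_theorem_of_calculus_interior) (use uv Gc Gd in \<open>auto simp: has_real_derivative_iff_has_vector_derivative\<close>)
  have Gv: "G v = 0" by (simp add: G_def g0)
  have "th u = pi/2" by (simp add: th_def \<delta>_def)
  then have Gu: "G u = 0" unfolding G_def by (simp only:) simp
  have g2i: "(\<lambda>t. (g t)\<^sup>2) integrable_on {u..v}"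
    by (rule integrable_continuous_interval) (intro continuous_intros gc)
  have hI: "((\<lambda>t. (g' t)\<^sup>2 - c\<^sup>2 * (g t)\<^sup>2 - G' t) has_integral
      (integral {u..v} (\<lambda>t. (g' t)\<^sup>2) - c\<^sup>2 * integral {u..v} (\<lambda>t. (g t)\<^sup>2) - 0)) {u..v}"
    using GI Gu Gv
    by (intro has_integral_diff has_integral_mult_right integrable_integral int g2i) auto
  have "0 \<le> integral {u..v} (\<lambda>t. (g' t)\<^sup>2) - c\<^sup>2 * integral {u..v} (\<lambda>t. (g t)\<^sup>2) - 0"
  proof (rule has_integral_nonneg[OF hI])
    fix t assume t: "t \<in> {u..v}"
    have s: "sin (th t) \<noteq> 0" using sinpos[of t] t by fastforce
    have "(g' t)\<^sup>2 - c\<^sup>2 * (g t)\<^sup>2 - G' t = (g' t + g t * c * cos (th t) / sin (th t))\<^sup>2"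
      unfolding G'_def using sq_aux[OF s sin_cos_squared_add3[of "th t"], of "g' t" c "- g t"]
      by (simp add: algebra_simps)
    then show "0 \<le> (g' t)\<^sup>2 - c\<^sup>2 * (g t)\<^sup>2 - G' t" by simp
  qed
  then show ?thesis by simp
qed


lemma wirt_left:
  fixes g g' :: "real \<Rightarrow> real" and u v :: real
  assumes uv: "u < v"
    and gc: "continuous_on {u..v} g"
    and gd: "\<And>t. t \<in> {u<..<v} \<Longrightarrow> (g has_real_derivative g' t) (at t)"
    and g0: "g u = 0" and int: "(\<lambda>t. (g' t)\<^sup>2) integrable_on {u..v}"
  shows "(pi/(2*(v-u)))\<^sup>2 * integral {u..v} (\<lambda>t. (g t)\<^sup>2) \<le> integral {u..v} (\<lambda>t. (g' t)\<^sup>2)"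
proof (rule sup_k)
  fix c assume c: "0 < c" "c < pi/(2*(v-u))"
  then have "c * (v-u) < pi/2" using uv by (simp add: field_simps)
  then show "c\<^sup>2 * integral {u..v} (\<lambda>t. (g t)\<^sup>2) \<le> integral {u..v} (\<lambda>t. (g' t)\<^sup>2)"
    using wirt_aux_left[OF uv c(1) _ gc gd g0 int] by blast
next
  show "0 \<le> integral {u..v} (\<lambda>t. (g t)\<^sup>2)"
    by (rule integral_nonneg) (auto intro: integrable_continuous_interval continuous_intros gc)
  show "0 \<le> integral {u..v} (\<lambda>t. (g' t)\<^sup>2)"
    by (rule integral_nonneg) (auto intro: int)
  show "0 < pi/(2*(v-u))" using uv by simp
qed

lemma wirt_right:
  fixes g g' :: "real \<Rightarrow> real" and u v :: real
  assumes uv: "u < v"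
    and gc: "continuous_on {u..v} g"
    and gd: "\<And>t. t \<in> {u<..<v} \<Longrightarrow> (g has_real_derivative g' t) (at t)"
    and g0: "g v = 0" and int: "(\<lambda>t. (g' t)\<^sup>2) integrable_on {u..v}"
  shows "(pi/(2*(v-u)))\<^sup>2 * integral {u..v} (\<lambda>t. (g t)\<^sup>2) \<le> integral {u..v} (\<lambda>t. (g' t)\<^sup>2)"
proof (rule sup_k)
  fix c assume c: "0 < c" "c < pi/(2*(v-u))"
  then have "c * (v-u) < pi/2" using uv by (simp add: field_simps)
  then show "c\<^sup>2 * integral {u..v} (\<lambda>t. (g t)\<^sup>2) \<le> integral {u..v} (\<lambda>t. (g' t)\<^sup>2)"
    using wirt_aux_right[OF uv c(1) _ gc gd g0 int] by blast
next
  show "0 \<le> integral {u..v} (\<lambda>t. (g t)\<^sup>2)"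
    by (rule integral_nonneg) (auto intro: integrable_continuous_interval continuous_intros gc)
  show "0 \<le> integral {u..v} (\<lambda>t. (g' t)\<^sup>2)"
    by (rule integral_nonneg) (auto intro: int)
  show "0 < pi/(2*(v-u))" using uv by simp
qed



lemma piece:
  fixes f g :: "real \<Rightarrow> real"
  assumes pr: "p \<le> r" and cont: "continuous_on {p..r} f"
    and d: "\<And>t. t \<in> {p<..<r} \<Longrightarrow> (f has_real_derivative g t) (at t)"
  shows "((\<lambda>t. (t - c) * g t) has_integral ((r-c) * f r - (p-c) * f p - integral {p..r} f)) {p..r}"
proof -
  have "((\<lambda>t. f t + (t - c) * g t) has_integral ((r-c) * f r - (p-c) * f p)) {p..r}"
  proof (rule fundamental_theorem_of_calculus_interior[where f="\<lambda>t. (t-c) * f t", OF pr])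
    show "continuous_on {p..r} (\<lambda>t. (t - c) * f t)" by (intro continuous_intros cont)
    fix t assume t: "t \<in> {p<..<r}"
    have "((\<lambda>t. (t-c) * f t) has_real_derivative (1 * f t + (t - c) * g t)) (at t)"
      by (auto intro!: derivative_eq_intros d[OF t])
    then show "((\<lambda>t. (t-c) * f t) has_vector_derivative f t + (t - c) * g t) (at t)"
      by (simp add: has_real_derivative_iff_has_vector_derivative)
  qed
  moreover have "(f has_integral integral {p..r} f) {p..r}"
    using cont by (intro integrable_integral integrable_continuous_interval)
  ultimately have "((\<lambda>t. (f t + (t - c) * g t) - f t) has_integral ((r-c) * f r - (p-c) * f p - integral {p..r} f)) {p..r}"
    by (rule has_integral_diff)
  then show ?thesis by simp
qed

lemma piece2:
  fixes p r c :: real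
  assumes pr: "p \<le> r"
  shows "((\<lambda>t. (t - c)\<^sup>2) has_integral (((r-c)^3 - (p-c)^3)/3)) {p..r}"
proof -
  have "((\<lambda>t. (t - c)\<^sup>2) has_integral ((\<lambda>t. (t-c)^3/3) r - (\<lambda>t. (t-c)^3/3) p)) {p..r}"
  proof (rule fundamental_theorem_of_calculus_interior[OF pr])
    show "continuous_on {p..r} (\<lambda>t. (t-c)^3/3)" by (intro continuous_intros) auto
    fix t
    have "((\<lambda>t. (t-c)^3/3) has_real_derivative (t - c)\<^sup>2) (at t)"
      by (auto intro!: derivative_eq_intros simp: power2_eq_square)
    then show "((\<lambda>t. (t-c)^3/3) has_vector_derivative (t - c)\<^sup>2) (at t)"
      by (simp add: has_real_derivative_iff_has_vector_derivative)
  qed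
  then show ?thesis by (simp add: diff_divide_distrib)
qed


lemma amgm_aux:
  fixes l u v :: real
  assumes "0 < l"
  shows "2*(u * v) \<le> l * u\<^sup>2 + v\<^sup>2/l"
proof -
  have "0 \<le> (l * u - v)\<^sup>2/l" using assms by simp
  also have "(l * u - v)\<^sup>2/l = l * u\<^sup>2 + v\<^sup>2/l - 2*(u * v)"
    using assms by (simp add: field_simps power2_eq_square)
  finally show ?thesis by simp
qed

theorem corollary2p8:
  fixes f f' f'' :: "real \<Rightarrow> real" and a b :: real
  assumes ab: "a < b"
    and cont: "continuous_on {a..b} f"
    and d1: "\<And>x. x \<in> {a<..<b} \<Longrightarrow> (f has_real_derivative f' x) (at x)"
    and d2: "\<And>x. x \<in> {a<..<b} \<Longrightarrow> (f' has_real_derivative f'' x) (at x)"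
    and cont2: "continuous_on {a<..<b} f''"
    and L2: "(\<lambda>t. (f'' t)\<^sup>2) integrable_on {a..b}"
    and sym: "\<And>x. x \<in> {a..b} \<Longrightarrow> f (a + b - x) = f x"
  shows "\<forall>x \<in> {a..(a+b)/2}.
    \<bar>f x - (1 / (b - a)) * integral {a..b} f\<bar>
      \<le> sqrt (b - a) / pi * sqrt ((b - a)\<^sup>2 / 48 + (x - (3*a + b)/4)\<^sup>2) * l2norm a b f''"
proof
  fix x assume x: "x \<in> {a..(a+b)/2}"
  define m where "m = (a+b)/2"
  have am: "a < m" "m < b" using ab by (auto simp: m_def)
  have mI: "m \<in> {a<..<b}" using am by auto
  have meas: "f'' \<in> borel_measurable (lebesgue_on {a<..<b})"
    by (rule continuous_imp_measurable_on_sets_lebesgue[OF cont2]) auto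
  have bnd: "(\<lambda>t. (1 + (f'' t)\<^sup>2)/2) integrable_on {a<..<b}"
    using L2 by (simp add: integrable_on_open_interval_real integrable_on_divide integrable_add integrable_const_ivl)
  have "f'' integrable_on {a<..<b}"
  proof (rule measurable_bounded_by_integrable_imp_integrable_real[OF meas bnd])
    fix t
    have "0 \<le> (\<bar>f'' t\<bar> - 1)\<^sup>2" by simp
    then show "\<bar>f'' t\<bar> \<le> (1 + (f'' t)\<^sup>2) / 2" by (simp add: power2_eq_square algebra_simps)
  qed auto
  then have f2i: "f'' integrable_on {a..b}" by (simp add: integrable_on_open_interval_real)
  define g where "g t = f' m + integral {a..t} f'' - integral {a..m} f''" for t
  have gc: "continuous_on {a..b} g"
    unfolding g_def by (intro continuous_intros indefinite_integral_continuous_1 f2i)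
  have ftc: "(f'' has_integral (f' r - f' p)) {p..r}" if "a < p" "p \<le> r" "r < b" for p r
  proof (rule fundamental_theorem_of_calculus[OF \<open>p \<le> r\<close>])
      fix y assume y: "y \<in> {p..r}"
      then have "y \<in> {a<..<b}" using that by auto
      from d2[OF this] show "(f' has_vector_derivative f'' y) (at y within {p..r})"
        by (simp add: has_real_derivative_iff_has_vector_derivative[symmetric] has_field_derivative_at_within)
  qed
  have sub: "f'' integrable_on {p..r}" if "a \<le> p" "r \<le> b" for p r
    using that by (intro integrable_subinterval_real[OF f2i]) auto
  have gf: "g t = f' t" if t: "t \<in> {a<..<b}" for t
  proof (cases "m \<le> t")
    case True
    have "integral {a..m} f'' + integral {m..t} f'' = integral {a..t} f''"
      using True am t by (intro Henstock_Kurzweil_Integration.integral_combine sub) auto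
    moreover have "integral {m..t} f'' = f' t - f' m"
      using ftc[of m t] True am t by (simp add: integral_unique)
    ultimately show ?thesis by (simp add: g_def)
  next
    case False
    have "integral {a..t} f'' + integral {t..m} f'' = integral {a..m} f''"
      using False am t by (intro Henstock_Kurzweil_Integration.integral_combine sub) auto
    moreover have "integral {t..m} f'' = f' m - f' t"
      using ftc[of t m] False am t by (simp add: integral_unique)
    ultimately show ?thesis by (simp add: g_def)
  qed
  have d1': "(f has_real_derivative g t) (at t)" if "t \<in> {a<..<b}" for t
    using d1[OF that] gf[OF that] by simp
  have d2': "(g has_real_derivative f'' t) (at t)" if "t \<in> {a<..<b}" for t
    by (rule has_field_derivative_transform_within_open[OF d2[OF that] _ that]) (auto simp: gf)
  have "f' m = 0"
  proof -
    have mm: "a + b - m = m" by (simp add: m_def field_simps)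
    have h1: "((\<lambda>y. f (a+b-y)) has_real_derivative (f' m * -1)) (at m)"
    proof -
      have dd: "((\<lambda>y. a+b-y) has_real_derivative -1) (at m)"
        by (auto intro!: derivative_eq_intros)
      have "(f has_real_derivative f' m) (at (a+b-m))" using d1[OF mI] mm by simp
      from DERIV_chain2[OF this dd] show ?thesis .
    qed
    have h2: "((\<lambda>y. f (a+b-y)) has_real_derivative f' m) (at m)"
      by (rule has_field_derivative_transform_within_open[OF d1[OF mI] _ mI]) (auto simp: sym)
    from DERIV_unique[OF h2 h1] show ?thesis by simp
  qed
  then have gm: "g m = 0" using gf[OF mI] by simp
  define xp where "xp = a + b - x"
  have xs: "a \<le> x" "x \<le> m" "m \<le> xp" "xp \<le> b" using x by (auto simp: xp_def m_def)
  have xpm: "xp - m = m - x" by (simp add: xp_def m_def field_simps)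
  have fxp: "f xp = f x" using sym[of x] x ab by (auto simp: xp_def)
  define q where "q t = (if t \<le> x then t - a else if t < xp then t - m else t - b)" for t
  have contsub: "continuous_on {p..r} f" if "a \<le> p" "r \<le> b" for p r
    using that by (intro continuous_on_subset[OF cont]) auto
  have dsub: "(f has_real_derivative g t) (at t)" if "a \<le> p" "r \<le> b" "t \<in> {p<..<r}" for p r t
    using that by (intro d1') auto
  have P1: "((\<lambda>t. (t-a) * g t) has_integral ((x-a) * f x - (a-a) * f a - integral {a..x} f)) {a..x}"
    by (rule piece[OF xs(1) contsub dsub]) (use xs in auto)
  have P2: "((\<lambda>t. (t-m) * g t) has_integral ((xp-m) * f xp - (x-m) * f x - integral {x..xp} f)) {x..xp}"
    by (rule piece[OF _ contsub dsub]) (use xs in auto)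
  have P3: "((\<lambda>t. (t-b) * g t) has_integral ((b-b) * f b - (xp-b) * f xp - integral {xp..b} f)) {xp..b}"
    by (rule piece[OF xs(4) contsub dsub]) (use xs in auto)
  have Q1: "((\<lambda>t. q t * g t) has_integral ((x-a) * f x - (a-a) * f a - integral {a..x} f)) {a..x}"
    by (rule has_integral_spike_finite[OF _ _ P1, of "{x,xp}"]) (auto simp: q_def)
  have Q2: "((\<lambda>t. q t * g t) has_integral ((xp-m) * f xp - (x-m) * f x - integral {x..xp} f)) {x..xp}"
    by (rule has_integral_spike_finite[OF _ _ P2, of "{x,xp}"]) (auto simp: q_def)
  have Q3: "((\<lambda>t. q t * g t) has_integral ((b-b) * f b - (xp-b) * f xp - integral {xp..b} f)) {xp..b}"
    by (rule has_integral_spike_finite[OF _ _ P3, of "{x,xp}"]) (use xs in \<open>auto simp: q_def\<close>)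
  define I where "I = (b-a) * f x - integral {a..b} f"
  have QI: "((\<lambda>t. q t * g t) has_integral I) {a..b}"
  proof -
    have "((\<lambda>t. q t * g t) has_integral (((x-a) * f x - (a-a) * f a - integral {a..x} f) + ((xp-m) * f xp - (x-m) * f x - integral {x..xp} f) + ((b-b) * f b - (xp-b) * f xp - integral {xp..b} f))) {a..b}"
      using xs by (intro has_integral_combine[OF _ _ has_integral_combine[OF _ _ Q1 Q2] Q3]) auto
    moreover have c1: "integral {a..x} f + integral {x..xp} f = integral {a..xp} f"
      using xs by (intro Henstock_Kurzweil_Integration.integral_combine integrable_continuous_interval contsub) auto
    moreover have c2: "integral {a..xp} f + integral {xp..b} f = integral {a..b} f"
      using xs by (intro Henstock_Kurzweil_Integration.integral_combine integrable_continuous_interval contsub) auto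
    moreover have "(((x-a) * f x - (a-a) * f a - integral {a..x} f) + ((xp-m) * f xp - (x-m) * f x - integral {x..xp} f) + ((b-b) * f b - (xp-b) * f xp - integral {xp..b} f)) = I"
      unfolding I_def fxp c2[symmetric] c1[symmetric] by (simp add: algebra_simps)
    ultimately show ?thesis by simp
  qed
  define A where "A = (b-a)*((b - a)\<^sup>2 / 48 + (x - (3*a + b)/4)\<^sup>2)"
  have R1: "((\<lambda>t. (t-a)\<^sup>2) has_integral (((x-a)^3 - (a-a)^3)/3)) {a..x}" by (rule piece2[OF xs(1)])
  have R2: "((\<lambda>t. (t-m)\<^sup>2) has_integral (((xp-m)^3 - (x-m)^3)/3)) {x..xp}" by (rule piece2) (use xs in auto)
  have R3: "((\<lambda>t. (t-b)\<^sup>2) has_integral (((b-b)^3 - (xp-b)^3)/3)) {xp..b}" by (rule piece2[OF xs(4)])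
  have S1: "((\<lambda>t. (q t)\<^sup>2) has_integral (((x-a)^3 - (a-a)^3)/3)) {a..x}"
    by (rule has_integral_spike_finite[OF _ _ R1, of "{x,xp}"]) (auto simp: q_def)
  have S2: "((\<lambda>t. (q t)\<^sup>2) has_integral (((xp-m)^3 - (x-m)^3)/3)) {x..xp}"
    by (rule has_integral_spike_finite[OF _ _ R2, of "{x,xp}"]) (auto simp: q_def)
  have S3: "((\<lambda>t. (q t)\<^sup>2) has_integral (((b-b)^3 - (xp-b)^3)/3)) {xp..b}"
    by (rule has_integral_spike_finite[OF _ _ R3, of "{x,xp}"]) (use xs in \<open>auto simp: q_def\<close>)
  have Aeq: "((x-a)^3 - (a-a)^3)/3 + ((xp-m)^3 - (x-m)^3)/3 + ((b-b)^3 - (xp-b)^3)/3 = A"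
    unfolding A_def xp_def m_def by (simp add: field_simps power2_eq_square power3_eq_cube)
  have QA: "((\<lambda>t. (q t)\<^sup>2) has_integral A) {a..b}"
    using has_integral_combine[OF _ _ has_integral_combine[OF _ _ S1 S2] S3] xs Aeq by auto
  have Apos: "A > 0" using ab unfolding A_def by (intro mult_pos_pos add_pos_nonneg) auto
  define B where "B = integral {a..b} (\<lambda>t. (g t)\<^sup>2)"
  define D where "D = integral {a..b} (\<lambda>t. (f'' t)\<^sup>2)"
  define k where "k = pi / (b - a)"
  have kpos: "k > 0" using ab by (simp add: k_def)
  have g2int: "(\<lambda>t. (g t)\<^sup>2) integrable_on {p..r}" if "a \<le> p" "r \<le> b" for p r
    using that by (intro integrable_continuous_interval continuous_intros continuous_on_subset[OF gc]) auto
  have f2int: "(\<lambda>t. (f'' t)\<^sup>2) integrable_on {p..r}" if "a \<le> p" "r \<le> b" for p r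
    using that by (intro integrable_subinterval_real[OF L2]) auto
  have W1: "(pi/(2*(b-m)))\<^sup>2 * integral {m..b} (\<lambda>t. (g t)\<^sup>2) \<le> integral {m..b} (\<lambda>t. (f'' t)\<^sup>2)"
    by (rule wirt_left[of m b g f'']) (use am gm in \<open>auto intro: continuous_on_subset[OF gc] d2' f2int\<close>)
  have W2: "(pi/(2*(m-a)))\<^sup>2 * integral {a..m} (\<lambda>t. (g t)\<^sup>2) \<le> integral {a..m} (\<lambda>t. (f'' t)\<^sup>2)"
    by (rule wirt_right[of a m g f'']) (use am gm in \<open>auto intro: continuous_on_subset[OF gc] d2' f2int\<close>)
  have e1: "2*(b-m) = b - a" "2*(m-a) = b-a" by (simp_all add: m_def field_simps)
  have cg: "integral {a..m} (\<lambda>t. (g t)\<^sup>2) + integral {m..b} (\<lambda>t. (g t)\<^sup>2) = B"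
    unfolding B_def using am by (intro Henstock_Kurzweil_Integration.integral_combine g2int) auto
  have cf: "integral {a..m} (\<lambda>t. (f'' t)\<^sup>2) + integral {m..b} (\<lambda>t. (f'' t)\<^sup>2) = D"
    unfolding D_def using am by (intro Henstock_Kurzweil_Integration.integral_combine f2int) auto
  have kB: "k\<^sup>2 * B \<le> D"
  proof -
    have "k\<^sup>2 * B = k\<^sup>2 * integral {a..m} (\<lambda>t. (g t)\<^sup>2) + k\<^sup>2 * integral {m..b} (\<lambda>t. (g t)\<^sup>2)"
      unfolding cg[symmetric] by (simp add: algebra_simps)
    then show ?thesis using W1 W2 cf unfolding e1 k_def[symmetric] by linarith
  qed
  have Bnn: "0 \<le> B" unfolding B_def by (intro integral_nonneg g2int) auto
  have Dnn: "0 \<le> D" unfolding D_def by (intro integral_nonneg f2int) auto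
  have BD: "B \<le> D / k\<^sup>2" using kB kpos by (simp add: field_simps)
  \<comment> \<open>Cauchy-Schwarz\<close>
  have GB: "((\<lambda>t. (g t)\<^sup>2) has_integral B) {a..b}" unfolding B_def using g2int[of a b] by auto
  have CS: "\<bar>I\<bar> \<le> (l*A + (D/k\<^sup>2)/l)/2" if l: "0 < l" for l
  proof -
    have rhs: "((\<lambda>t. l * (q t)\<^sup>2 + (g t)\<^sup>2 / l) has_integral (l*A + B/l)) {a..b}"
      by (intro has_integral_add has_integral_mult_right has_integral_divide QA GB)
    have "2*I \<le> l*A + B/l"
      by (rule has_integral_le[OF has_integral_mult_right[OF QI] rhs]) (use amgm_aux[OF l] in auto)
    moreover have "2*(-I) \<le> l*A + B/l"
    proof (rule has_integral_le[OF _ rhs])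
      show "((\<lambda>t. 2 * (q t * (- g t))) has_integral 2 * (-I)) {a..b}"
        using has_integral_mult_right[OF has_integral_neg[OF QI], of 2] by simp
      show "2 * (q t * (- g t)) \<le> l * (q t)\<^sup>2 + (g t)\<^sup>2 / l" for t
        using amgm_aux[OF l, of "q t" "- g t"] by simp
    qed
    moreover have "B/l \<le> (D/k\<^sup>2)/l" using divide_right_mono[OF BD, of l] l by linarith
    ultimately show ?thesis by (simp add: abs_le_iff field_simps)
  qed
  have "\<bar>I\<bar> \<le> sqrt (A * (D/k\<^sup>2))"
    by (rule cs_real[OF Apos _ CS]) (use Dnn in auto)
  also have "sqrt (A * (D/k\<^sup>2)) = sqrt (b-a) * sqrt ((b - a)\<^sup>2 / 48 + (x - (3*a + b)/4)\<^sup>2) * sqrt D / k"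
    unfolding A_def using kpos by (simp add: real_sqrt_mult real_sqrt_divide)
  finally have fin: "\<bar>I\<bar> \<le> sqrt (b-a) * sqrt ((b - a)\<^sup>2 / 48 + (x - (3*a + b)/4)\<^sup>2) * sqrt D * (b - a) / pi"
    by (simp add: k_def)
  have "f x - (1 / (b - a)) * integral {a..b} f = I / (b-a)"
    unfolding I_def using ab by (simp add: field_simps)
  then have "\<bar>f x - (1 / (b - a)) * integral {a..b} f\<bar> = \<bar>I\<bar> / (b-a)" using ab by simp
  also have "\<dots> \<le> sqrt (b-a) * sqrt ((b - a)\<^sup>2 / 48 + (x - (3*a + b)/4)\<^sup>2) * sqrt D * (b - a) / pi / (b-a)"
    using fin ab by (intro divide_right_mono) auto
  also have "\<dots> = sqrt (b - a) / pi * sqrt ((b - a)\<^sup>2 / 48 + (x - (3*a + b)/4)\<^sup>2) * l2norm a b f''"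
    using ab by (simp add: l2norm_def D_def)
  finally show "\<bar>f x - (1 / (b - a)) * integral {a..b} f\<bar>
      \<le> sqrt (b - a) / pi * sqrt ((b - a)\<^sup>2 / 48 + (x - (3*a + b)/4)\<^sup>2) * l2norm a b f''" .
qed


end
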